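(* Let $(U_L^j)_{j\geq1}$ be finite-energy solutions of the linear wave equation on $\mathbb{R}^N$ and $\{\lambda_{j,n},x_{j,n},t_{j,n}\}_n$, $j\geq1$, orthogonal sequences of parameters, with $\sum_{j\geq1}\|U_L^j\|_{S(\mathbb{R})}^{\frac{2(N+1)}{N-2}}<\infty$. Let $\{(u_{0,n},u_{1,n})\}_n$ be bounded in $\dot H^1\times L^2$, $u_{L,n}(t)=S_L(t)(u_{0,n},u_{1,n})$, and assume there is a sequence of integers $J_k\to\infty$ with $$\lim_{k\to\infty}\limsup_{n\to\infty}\Big\|u_{L,n}-\sum_{j=1}^{J_k}U^j_{L,n}\Big\|_{S(\mathbb{R})}=0.$$ Then $\lim_{J\to\infty}\limsup_{n\to\infty}\|u_{L,n}-\sum_{j=1}^JU^j_{L,n}\|_{S(\mathbb{R})}=0$, i.e. $(U_L^j,\{\lambda_{j,n},x_{j,n},t_{j,n}\}_n)_j$ is a profile decomposition of $\{(u_{0,n},u_{1,n})\}_n$.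
   Context: $N\in\{3,4,5\}$, $S(I)=L^{\frac{2(N+1)}{N-2}}(I\times\mathbb{R}^N)$, $S_L(t)$ the linear wave propagator. Orthogonality: for $j\neq k$, $\lim_n|\log\frac{\lambda_{j,n}}{\lambda_{k,n}}|+\frac{|t_{j,n}-t_{k,n}|}{\lambda_{j,n}}+\frac{|x_{j,n}-x_{k,n}|}{\lambda_{j,n}}=\infty$. $U^j_{L,n}(t,x)=\lambda_{j,n}^{-\frac N2+1}U_L^j(\frac{t-t_{j,n}}{\lambda_{j,n}},\frac{x-x_{j,n}}{\lambda_{j,n}})$. *)

theory Defs
  imports "HOL-Analysis.Analysis"
begin

definition C1c :: "('a::euclidean_space \<Rightarrow> real) \<Rightarrow> ('a \<Rightarrow> 'a \<Rightarrow> real) \<Rightarrow> bool" where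
  "C1c \<phi> \<phi>' \<longleftrightarrow> (\<forall>x. (\<phi> has_derivative \<phi>' x) (at x)) \<and>
     (\<forall>v. continuous_on UNIV (\<lambda>x. \<phi>' x v)) \<and> compact (closure {x. \<phi> x \<noteq> 0})"

definition weak_grad :: "(real^'n \<Rightarrow> real) \<Rightarrow> (real^'n \<Rightarrow> real^'n) \<Rightarrow> bool" where
  "weak_grad f g \<longleftrightarrow> (\<forall>\<phi> \<phi>'. C1c \<phi> \<phi>' \<longrightarrow>
     (\<forall>i. (\<integral>x. f x * \<phi>' x (axis i 1) \<partial>lborel) = - (\<integral>x. g x $ i * \<phi> x \<partial>lborel)))"

definition sob_exp :: "nat \<Rightarrow> real" where
  "sob_exp N = 2 * real N / (real N - 2)"

definition strich_exp :: "nat \<Rightarrow> real" where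
  "strich_exp N = 2 * (real N + 1) / (real N - 2)"

text \<open>f is an element of \<dot>H^1(R^N) (realized in L^{2N/(N-2)}) with weak gradient g in L^2.\<close>
definition Hdot1 :: "(real^'n \<Rightarrow> real) \<Rightarrow> (real^'n \<Rightarrow> real^'n) \<Rightarrow> bool" where
  "Hdot1 f g \<longleftrightarrow> f \<in> borel_measurable lborel \<and> g \<in> borel_measurable lborel \<and>
     (\<integral>\<^sup>+x. ennreal (\<bar>f x\<bar> powr sob_exp CARD('n)) \<partial>lborel) < \<infinity> \<and>
     (\<integral>\<^sup>+x. ennreal (norm (g x) ^ 2) \<partial>lborel) < \<infinity> \<and> weak_grad f g"

definition L2 :: "(real^'n \<Rightarrow> real) \<Rightarrow> bool" where
  "L2 f \<longleftrightarrow> f \<in> borel_measurable lborel \<and> (\<integral>\<^sup>+x. ennreal ((f x)^2) \<partial>lborel) < \<infinity>"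

text \<open>Finite-energy solution U of the linear wave equation u_tt - \<Delta>u = 0 on R x R^N,
  with time derivative V and spatial gradient G:
  U \<in> C(R, \<dot>H^1), V = \<partial>_t U \<in> C(R, L^2), equation in the distributional sense.\<close>
definition fe_wave_sol :: "(real \<Rightarrow> real^'n \<Rightarrow> real) \<Rightarrow> (real \<Rightarrow> real^'n \<Rightarrow> real)
    \<Rightarrow> (real \<Rightarrow> real^'n \<Rightarrow> real^'n) \<Rightarrow> bool" where
  "fe_wave_sol U V G \<longleftrightarrow>
     (\<lambda>z. U (fst z) (snd z)) \<in> borel_measurable (lborel :: (real \<times> (real^'n)) measure) \<and>
     (\<lambda>z. V (fst z) (snd z)) \<in> borel_measurable (lborel :: (real \<times> (real^'n)) measure) \<and>
     (\<lambda>z. G (fst z) (snd z)) \<in> borel_measurable (lborel :: (real \<times> (real^'n)) measure) \<and>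
     (\<forall>t. Hdot1 (U t) (G t) \<and> L2 (V t)) \<and>
     (\<forall>t0. ((\<lambda>t. \<integral>\<^sup>+x. ennreal (norm (G t x - G t0 x) ^ 2) \<partial>lborel) \<longlongrightarrow> 0) (at t0)) \<and>
     (\<forall>t0. ((\<lambda>t. \<integral>\<^sup>+x. ennreal ((V t x - V t0 x) ^ 2) \<partial>lborel) \<longlongrightarrow> 0) (at t0)) \<and>
     (\<forall>\<psi> \<psi>'. C1c \<psi> \<psi>' \<longrightarrow>
        (\<integral>z. U (fst z) (snd z) * \<psi>' z (1, 0) \<partial>(lborel :: (real \<times> (real^'n)) measure))
        = - (\<integral>z. V (fst z) (snd z) * \<psi> z \<partial>lborel)) \<and>
     (\<forall>\<psi> \<psi>'. C1c \<psi> \<psi>' \<longrightarrow>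
        (\<integral>z. V (fst z) (snd z) * \<psi>' z (1, 0) \<partial>(lborel :: (real \<times> (real^'n)) measure))
        = (\<integral>z. G (fst z) (snd z) \<bullet> (\<chi> i. \<psi>' z (0, axis i 1)) \<partial>lborel))"

definition Snorm_p :: "(real \<Rightarrow> real^'n \<Rightarrow> real) \<Rightarrow> ennreal" where
  "Snorm_p f = (\<integral>\<^sup>+z. ennreal (\<bar>f (fst z) (snd z)\<bar> powr strich_exp CARD('n))
        \<partial>(lborel :: (real \<times> (real^'n)) measure))"

definition Snorm :: "(real \<Rightarrow> real^'n \<Rightarrow> real) \<Rightarrow> ennreal" where
  "Snorm f = (if Snorm_p f = \<infinity> then \<infinity>
              else ennreal (enn2real (Snorm_p f) powr (1 / strich_exp CARD('n))))"

definition resc :: "real \<Rightarrow> real \<Rightarrow> real^'n \<Rightarrow> (real \<Rightarrow> real^'n \<Rightarrow> real) \<Rightarrow> real \<Rightarrow> real^'n \<Rightarrow> real" where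
  "resc lam t0 x0 U = (\<lambda>t x. lam powr (1 - real CARD('n) / 2) *
       U ((t - t0) / lam) ((1 / lam) *\<^sub>R (x - x0)))"

definition orth_params :: "(nat \<Rightarrow> real) \<Rightarrow> (nat \<Rightarrow> real) \<Rightarrow> (nat \<Rightarrow> real^'n)
   \<Rightarrow> (nat \<Rightarrow> real) \<Rightarrow> (nat \<Rightarrow> real) \<Rightarrow> (nat \<Rightarrow> real^'n) \<Rightarrow> bool" where
  "orth_params lj tj xj lk tk xk \<longleftrightarrow>
     filterlim (\<lambda>n. \<bar>ln (lj n / lk n)\<bar> + \<bar>tj n - tk n\<bar> / lj n + norm (xj n - xk n) / lj n)
       at_top sequentially"

end

theory Submission
  imports Defs
begin


definition pexp :: "nat \<Rightarrow> nat" where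
  "pexp N = (if N = 3 then 8 else if N = 4 then 5 else 4)"
definition aexp :: "nat \<Rightarrow> real" where
  "aexp N = real N / 2 - 1"

lemma exps:
  assumes "N \<in> {3,4,5}"
  shows "strich_exp N = real (pexp N)" "real (pexp N) * aexp N = real N + 1"
    "aexp N > 0" "pexp N \<ge> 4" "1 - real N / 2 = - aexp N"
  using assms by (auto simp: pexp_def aexp_def strich_exp_def)

lemma pow_diff_le:
  fixes x y :: real assumes "0 \<le> y" "y \<le> x"
  shows "x ^ Suc q - y ^ Suc q \<le> real (Suc q) * x ^ q * (x - y)"
proof -
  have "x ^ Suc q - y ^ Suc q = (x - y) * (\<Sum>p<Suc q. (x ^ p) * y ^ (q - p))"
    by (rule diff_power_eq_sum)
  also have "(\<Sum>p<Suc q. (x ^ p) * y ^ (q - p)) \<le> (\<Sum>p<Suc q. x ^ q)"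
  proof (rule sum_mono)
    fix p assume "p \<in> {..<Suc q}"
    hence "p \<le> q" by auto
    have "x ^ p * y ^ (q - p) \<le> x ^ p * x ^ (q - p)"
      using assms by (intro mult_left_mono power_mono) auto
    also have "\<dots> = x ^ q" using \<open>p \<le> q\<close> by (simp add: power_add[symmetric])
    finally show "x ^ p * y ^ (q - p) \<le> x ^ q" .
  qed
  hence "(x - y) * (\<Sum>p<Suc q. (x ^ p) * y ^ (q - p)) \<le> (x - y) * (\<Sum>p<Suc q. x ^ q)"
    using assms by (intro mult_left_mono) auto
  finally show ?thesis by (simp add: algebra_simps)
qed

lemma alg_ineq:
  fixes b :: "'i \<Rightarrow> real" and F :: "'i set"
  assumes F: "finite F" and b: "\<And>j. j \<in> F \<Longrightarrow> b j \<ge> 0"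
  shows "(\<Sum>j\<in>F. b j) ^ Suc q \<le> (\<Sum>j\<in>F. b j ^ Suc q)
     + real (Suc q) * real (card F) ^ q * (\<Sum>j\<in>F. \<Sum>k\<in>F - {j}. b j * b k ^ q)"
proof (cases "F = {}")
  case True then show ?thesis by simp
next
  case False
  have "Max (b ` F) \<in> b ` F" using F False by (intro Max_in) auto
  then obtain m where m1: "m \<in> F" "b m = Max (b ` F)" by auto
  have m: "m \<in> F" "\<And>j. j \<in> F \<Longrightarrow> b j \<le> b m"
    using m1 F by auto
  define S where "S = (\<Sum>j\<in>F. b j)"
  define C where "C = real (Suc q) * real (card F) ^ q"
  have C0: "C \<ge> 0" by (simp add: C_def)
  have Sm: "S = b m + (\<Sum>j\<in>F - {m}. b j)"
    unfolding S_def using F m(1) by (simp add: sum.remove)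
  have bm0: "b m \<ge> 0" using b m by auto
  have rest0: "(\<Sum>j\<in>F - {m}. b j) \<ge> 0" using b by (intro sum_nonneg) auto
  have SM: "b m \<le> S" using Sm rest0 by simp
  have Sle: "S \<le> real (card F) * b m"
    unfolding S_def using sum_mono[of F b "\<lambda>_. b m"] m by simp
  have "S ^ Suc q - b m ^ Suc q \<le> real (Suc q) * S ^ q * (S - b m)"
    by (rule pow_diff_le[OF bm0 SM])
  also have "S ^ q \<le> (real (card F) * b m) ^ q"
    using Sle SM bm0 by (intro power_mono) auto
  hence "real (Suc q) * S ^ q * (S - b m) \<le> real (Suc q) * (real (card F) * b m) ^ q * (S - b m)"
    using SM by (intro mult_right_mono mult_left_mono) auto
  also have "\<dots> = C * (\<Sum>j\<in>F - {m}. b j * b m ^ q)"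
    using Sm by (simp add: C_def power_mult_distrib sum_distrib_right sum_distrib_left mult_ac)
  also have "(\<Sum>j\<in>F - {m}. b j * b m ^ q) \<le> (\<Sum>j\<in>F. \<Sum>k\<in>F - {j}. b j * b k ^ q)"
  proof -
    have "(\<Sum>j\<in>F - {m}. b j * b m ^ q) \<le> (\<Sum>j\<in>F - {m}. \<Sum>k\<in>F - {j}. b j * b k ^ q)"
    proof (rule sum_mono)
      fix j assume j: "j \<in> F - {m}"
      show "b j * b m ^ q \<le> (\<Sum>k\<in>F - {j}. b j * b k ^ q)"
        using j m(1) F b by (intro member_le_sum) auto
    qed
    also have "\<dots> \<le> (\<Sum>j\<in>F. \<Sum>k\<in>F - {j}. b j * b k ^ q)"
      using F b by (intro sum_mono2) (auto intro!: sum_nonneg)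
    finally show ?thesis .
  qed
  hence "C * (\<Sum>j\<in>F - {m}. b j * b m ^ q) \<le> C * (\<Sum>j\<in>F. \<Sum>k\<in>F - {j}. b j * b k ^ q)"
    using C0 by (rule mult_left_mono)
  finally have "S ^ Suc q \<le> b m ^ Suc q + C * (\<Sum>j\<in>F. \<Sum>k\<in>F - {j}. b j * b k ^ q)" by simp
  moreover have "b m ^ Suc q \<le> (\<Sum>j\<in>F. b j ^ Suc q)"
    using F m(1) b by (intro member_le_sum) auto
  ultimately show ?thesis unfolding S_def C_def by simp
qed



definition Sp :: "nat \<Rightarrow> ('a::euclidean_space \<Rightarrow> real) \<Rightarrow> ennreal" where
  "Sp P F = (\<integral>\<^sup>+z. ennreal (\<bar>F z\<bar> ^ P) \<partial>lborel)"
definition Tr :: "real \<Rightarrow> real \<Rightarrow> 'a::euclidean_space \<Rightarrow> ('a \<Rightarrow> real) \<Rightarrow> 'a \<Rightarrow> real" where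
  "Tr a lam c F = (\<lambda>z. lam powr (-a) * F ((1/lam) *\<^sub>R (z - c)))"

lemma nn_integral_euclid_affine:
  fixes f :: "'a::euclidean_space \<Rightarrow> ennreal" and c :: real
  assumes [measurable]: "f \<in> borel_measurable borel" and c: "c \<noteq> 0"
  shows "(\<integral>\<^sup>+x. f x \<partial>lborel) = ennreal (\<bar>c\<bar>^DIM('a)) * (\<integral>\<^sup>+x. f (t + c *\<^sub>R x) \<partial>lborel)"
  by (subst lborel_affine[OF c, of t])
     (simp add: nn_integral_density nn_integral_distr nn_integral_cmult)

lemma nn_integral_rescale:
  fixes G :: "'a::euclidean_space \<Rightarrow> ennreal" and lam :: real
  assumes [measurable]: "G \<in> borel_measurable borel" and lam: "lam > 0"
  shows "(\<integral>\<^sup>+z. G ((1/lam) *\<^sub>R (z - c)) \<partial>lborel) = ennreal (lam^DIM('a)) * (\<integral>\<^sup>+x. G x \<partial>lborel)"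
proof -
  have "(\<integral>\<^sup>+z. G ((1/lam) *\<^sub>R (z - c)) \<partial>lborel) = ennreal (\<bar>lam\<bar>^DIM('a)) * (\<integral>\<^sup>+x. G ((1/lam) *\<^sub>R ((c + lam *\<^sub>R x) - c)) \<partial>lborel)"
    by (rule nn_integral_euclid_affine) (use lam in auto)
  also have "(\<lambda>x. G ((1/lam) *\<^sub>R ((c + lam *\<^sub>R x) - c))) = G"
    using lam by (auto simp: fun_eq_iff)
  finally show ?thesis using lam by simp
qed

lemma Tr_abs_pow:
  assumes lam: "lam > 0" and aP: "real P * a = real DIM('a::euclidean_space)"
  shows "\<bar>Tr a lam c F z\<bar> ^ P = inverse (lam ^ DIM('a)) * \<bar>F ((1/lam) *\<^sub>R (z - (c::'a)))\<bar> ^ P"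
proof -
  have "(lam powr (-a)) ^ P = lam powr (- a * real P)"
    using lam by (simp add: powr_realpow[symmetric] powr_powr)
  also have "\<dots> = lam powr (- real DIM('a))" using aP by (simp add: mult.commute)
  also have "\<dots> = inverse (lam ^ DIM('a))"
    using lam by (simp add: powr_minus powr_realpow)
  finally have e: "(lam powr (-a)) ^ P = inverse (lam ^ DIM('a))" .
  show ?thesis unfolding Tr_def using lam
    by (simp add: abs_mult power_mult_distrib e)
qed

lemma Sp_Tr:
  fixes F :: "'a::euclidean_space \<Rightarrow> real"
  assumes [measurable]: "F \<in> borel_measurable borel" and lam: "lam > 0"
    and aP: "real P * a = real DIM('a)"
  shows "Sp P (Tr a lam c F) = Sp P F"
proof -
  have "Sp P (Tr a lam c F) = (\<integral>\<^sup>+z. ennreal (inverse (lam ^ DIM('a))) * ennreal (\<bar>F ((1/lam) *\<^sub>R (z - c))\<bar> ^ P) \<partial>lborel)"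
    unfolding Sp_def Tr_abs_pow[OF lam aP]
    using lam by (intro nn_integral_cong) (simp add: ennreal_mult)
  also have "\<dots> = ennreal (inverse (lam ^ DIM('a))) * (\<integral>\<^sup>+z. ennreal (\<bar>F ((1/lam) *\<^sub>R (z - c))\<bar> ^ P) \<partial>lborel)"
    by (rule nn_integral_cmult) measurable
  also have "(\<integral>\<^sup>+z. ennreal (\<bar>F ((1/lam) *\<^sub>R (z - c))\<bar> ^ P) \<partial>lborel) = ennreal (lam^DIM('a)) * Sp P F"
    unfolding Sp_def
    by (rule nn_integral_rescale[OF _ lam, where G="\<lambda>w. ennreal (\<bar>F w\<bar> ^ P)"]) measurable
  also have "ennreal (inverse (lam ^ DIM('a))) * (ennreal (lam^DIM('a)) * Sp P F) = Sp P F"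
    using lam by (simp add: mult.assoc[symmetric] ennreal_mult[symmetric])
  finally show ?thesis .
qed

lemma uc_resc:
  fixes U :: "real \<Rightarrow> real^'n \<Rightarrow> real"
  assumes "CARD('n) \<in> {3,4,5}"
  shows "(\<lambda>z. resc lam t0 x0 U (fst z) (snd z)) = Tr (aexp CARD('n)) lam (t0, x0) (\<lambda>z. U (fst z) (snd z))"
proof (rule ext)
  fix z :: "real \<times> (real^'n)"
  obtain t x where z: "z = (t, x)" by (cases z)
  show "resc lam t0 x0 U (fst z) (snd z) = Tr (aexp CARD('n)) lam (t0, x0) (\<lambda>z. U (fst z) (snd z)) z"
    unfolding z resc_def Tr_def using exps(5)[OF assms] by simp
qed



lemma trunc_small:
  fixes F :: "'a::euclidean_space \<Rightarrow> real" and d :: real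
  assumes [measurable]: "F \<in> borel_measurable borel" and fin: "Sp P F < \<infinity>" and P: "P > 0"
    and d: "d > 0"
  shows "\<exists>M R. Sp P (\<lambda>z. F z * indicator {z. \<not> (\<bar>F z\<bar> \<le> M \<and> norm z \<le> R)} z) < ennreal d"
proof -
  define h where "h i z = ennreal (\<bar>F z\<bar> ^ P) * indicator {z. \<not> (\<bar>F z\<bar> \<le> real i \<and> norm z \<le> real i)} z" for i :: nat and z
  have hm[measurable]: "h i \<in> borel_measurable lborel" for i
    unfolding h_def by measurable
  have dec: "decseq h"
  proof (rule decseq_SucI, rule le_funI)
    fix n :: nat and z
    have "indicator {z. \<not> (\<bar>F z\<bar> \<le> real (Suc n) \<and> norm z \<le> real (Suc n))} z
       \<le> (indicator {z. \<not> (\<bar>F z\<bar> \<le> real n \<and> norm z \<le> real n)} z :: ennreal)"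
      by (auto simp: indicator_def)
    thus "h (Suc n) z \<le> h n z" unfolding h_def by (rule mult_left_mono) simp
  qed
  have hint: "(\<integral>\<^sup>+ z. h i z \<partial>lborel) < \<infinity>" for i
  proof -
    have "(\<integral>\<^sup>+ z. h i z \<partial>lborel) \<le> Sp P F"
      unfolding Sp_def h_def by (intro nn_integral_mono) (auto simp: indicator_def)
    thus ?thesis using fin by simp
  qed
  have inf0: "(INF i. h i z) = 0" for z
  proof -
    obtain i :: nat where "\<bar>F z\<bar> \<le> real i" "norm z \<le> real i"
      using real_arch_simple[of "max \<bar>F z\<bar> (norm z)"] by auto
    hence "h i z = 0" by (simp add: h_def)
    thus ?thesis by (metis INF_lower iso_tuple_UNIV_I le_zero_eq)
  qed
  have "(INF i. integral\<^sup>N lborel (h i)) = (\<integral>\<^sup>+ z. (INF i. h i z) \<partial>lborel)"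
    by (rule nn_integral_monotone_convergence_INF_decseq[OF dec hm hint, symmetric])
  also have "\<dots> = 0" by (simp add: inf0)
  finally have "(INF i. integral\<^sup>N lborel (h i)) < ennreal d" using d by simp
  then obtain i where "integral\<^sup>N lborel (h i) < ennreal d" by (auto simp: INF_less_iff)
  moreover have "integral\<^sup>N lborel (h i) = Sp P (\<lambda>z. F z * indicator {z. \<not> (\<bar>F z\<bar> \<le> real i \<and> norm z \<le> real i)} z)"
    unfolding Sp_def h_def using P by (intro nn_integral_cong) (auto simp: indicator_def)
  ultimately show ?thesis by auto
qed



lemma pw_bound1:
  fixes l l' a :: real and q :: nat
  assumes l: "0 < l" "0 < l'" "l \<le> l'" and a: "a > 0" and q: "q \<ge> 1"
  shows "l powr (-a) * l' powr (-a * real q) * l powr (a * (real q + 1)) \<le> exp (-a * \<bar>ln (l / l')\<bar>)"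
proof -
  have lnle: "ln l \<le> ln l'" using l by simp
  have "l powr (-a) * l' powr (-a * real q) * l powr (a * (real q + 1))
      = exp (-a * ln l + (-a * real q) * ln l' + a * (real q + 1) * ln l)"
    using l by (simp add: powr_def mult_exp_exp algebra_simps)
  also have "\<dots> \<le> exp (-a * \<bar>ln (l / l')\<bar>)"
  proof -
    have e: "\<bar>ln (l / l')\<bar> = ln l' - ln l" using l lnle by (simp add: ln_div)
    have h: "(a * real q - a) * (ln l - ln l') \<le> 0"
      using a q lnle by (intro mult_nonneg_nonpos) auto
    have "-a * ln l + (-a * real q) * ln l' + a * (real q + 1) * ln l
       = (a * real q - a) * (ln l - ln l') + (-a * (ln l' - ln l))"
      by (simp add: algebra_simps)
    also have "\<dots> \<le> -a * (ln l' - ln l)" using h by simp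
    finally show ?thesis unfolding e by simp
  qed
  finally show ?thesis .
qed

lemma pw_bound2:
  fixes l l' a :: real and q :: nat
  assumes l: "0 < l" "0 < l'" "l' \<le> l" and a: "a > 0"
  shows "l powr (-a) * l' powr (-a * real q) * l' powr (a * (real q + 1)) \<le> exp (-a * \<bar>ln (l / l')\<bar>)"
proof -
  have lnle: "ln l' \<le> ln l" using l by simp
  have "l powr (-a) * l' powr (-a * real q) * l' powr (a * (real q + 1))
      = exp (-a * ln l + (-a * real q) * ln l' + a * (real q + 1) * ln l')"
    using l by (simp add: powr_def mult_exp_exp algebra_simps)
  also have "\<dots> = exp (-a * \<bar>ln (l / l')\<bar>)"
  proof -
    have e: "\<bar>ln (l / l')\<bar> = ln l - ln l'" using l lnle by (simp add: ln_div)
    have "-a * ln l + (-a * real q) * ln l' + a * (real q + 1) * ln l' = -a * (ln l - ln l')"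
      by (simp add: algebra_simps)
    thus ?thesis unfolding e by simp
  qed
  finally show ?thesis by simp
qed

lemma Tr_bound:
  fixes F :: "'a::euclidean_space \<Rightarrow> real"
  assumes bF: "\<And>z. \<bar>F z\<bar> \<le> M" "\<And>z. norm z > R \<Longrightarrow> F z = 0" and lam: "lam > 0"
  shows "\<bar>Tr a lam c F z\<bar> \<le> lam powr (-a) * M * indicator (cball 0 R) ((1/lam) *\<^sub>R (z - c))"
proof (cases "norm ((1/lam) *\<^sub>R (z - c)) \<le> R")
  case True
  thus ?thesis unfolding Tr_def using bF(1) lam
    by (simp add: abs_mult indicator_def mult_left_mono)
next
  case False
  thus ?thesis unfolding Tr_def using bF lam by (simp add: indicator_def)
qed



lemma cross_pointwise:
  fixes F G :: "'a::euclidean_space \<Rightarrow> real"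
  assumes bF: "\<And>z. \<bar>F z\<bar> \<le> M" "\<And>z. norm z > R \<Longrightarrow> F z = 0"
    and bG: "\<And>z. \<bar>G z\<bar> \<le> M" "\<And>z. norm z > R \<Longrightarrow> G z = 0"
    and lam: "lam > 0" "lam' > 0" and q: "q \<ge> 1"
  shows "\<bar>Tr a lam c F z\<bar> * \<bar>Tr a lam' c' G z\<bar> ^ q \<le>
     (M ^ Suc q * (lam powr (-a) * lam' powr (-a * real q))) *
       (indicator (cball 0 R) ((1/lam) *\<^sub>R (z - c)) * indicator (cball 0 R) ((1/lam') *\<^sub>R (z - c')))"
proof -
  define i1 :: real where "i1 = indicator (cball 0 R) ((1/lam) *\<^sub>R (z - c))"
  define i2 :: real where "i2 = indicator (cball 0 R) ((1/lam') *\<^sub>R (z - c'))"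
  have M0: "M \<ge> 0" using bF(1)[of 0] by simp
  have i1: "i1 = 0 \<or> i1 = 1" and i2: "i2 = 0 \<or> i2 = 1" by (auto simp: i1_def i2_def indicator_def)
  have t1: "\<bar>Tr a lam c F z\<bar> \<le> lam powr (-a) * M * i1"
    unfolding i1_def by (rule Tr_bound[OF bF lam(1)])
  have t2: "\<bar>Tr a lam' c' G z\<bar> \<le> lam' powr (-a) * M * i2"
    unfolding i2_def by (rule Tr_bound[OF bG lam(2)])
  have "\<bar>Tr a lam c F z\<bar> * \<bar>Tr a lam' c' G z\<bar> ^ q \<le> (lam powr (-a) * M * i1) * (lam' powr (-a) * M * i2) ^ q"
    using t1 t2 by (intro mult_mono power_mono) auto
  also have "\<dots> = (M ^ Suc q * (lam powr (-a) * lam' powr (-a * real q))) * (i1 * i2)"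
  proof -
    have "i2 ^ q = i2" using i2 q by (cases "i2 = 0") auto
    moreover have "(lam' powr (-a)) ^ q = lam' powr (-a * real q)"
      using lam by (simp add: powr_realpow[symmetric] powr_powr)
    ultimately show ?thesis by (simp add: power_mult_distrib algebra_simps)
  qed
  finally show ?thesis unfolding i1_def i2_def .
qed

lemma cross_int_bound:
  fixes F G :: "'a::euclidean_space \<Rightarrow> real"
  assumes [measurable]: "F \<in> borel_measurable borel" "G \<in> borel_measurable borel"
    and bF: "\<And>z. \<bar>F z\<bar> \<le> M" "\<And>z. norm z > R \<Longrightarrow> F z = 0"
    and bG: "\<And>z. \<bar>G z\<bar> \<le> M" "\<And>z. norm z > R \<Longrightarrow> G z = 0"
    and lam: "lam > 0" "lam' > 0" and q: "q \<ge> 1" and a: "a > 0"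
    and aD: "a * (real q + 1) = real DIM('a)"
  shows "(\<integral>\<^sup>+z. ennreal (\<bar>Tr a lam c F z\<bar> * \<bar>Tr a lam' c' G z\<bar> ^ q) \<partial>lborel)
     \<le> ennreal (M ^ Suc q * measure lborel (cball (0::'a) R) * exp (-a * \<bar>ln (lam / lam')\<bar>))"
proof -
  have cb[measurable]: "cball (0::'a) R \<in> sets borel" by (simp add: borel_closed)
  define K where "K = M ^ Suc q * (lam powr (-a) * lam' powr (-a * real q))"
  define m0 where "m0 = measure lborel (cball (0::'a) R)"
  have M0: "M \<ge> 0" using bF(1)[of 0] by simp
  have K0: "K \<ge> 0" unfolding K_def using M0 by simp
  have em: "emeasure lborel (cball (0::'a) R) = ennreal m0"
    unfolding m0_def using emeasure_lborel_cball_finite[of "0::'a" R]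
    by (intro emeasure_eq_ennreal_measure) auto
  have m00: "m0 \<ge> 0" by (simp add: m0_def)
  have ind_int: "(\<integral>\<^sup>+z. ennreal (indicator (cball 0 R) ((1/l) *\<^sub>R (z - d))) \<partial>lborel) = ennreal (l ^ DIM('a) * m0)"
    if l: "l > 0" for l :: real and d :: 'a
  proof -
    have "(\<integral>\<^sup>+z. ennreal (indicator (cball 0 R) ((1/l) *\<^sub>R (z - d))) \<partial>lborel)
        = (\<integral>\<^sup>+z. (indicator (cball (0::'a) R) :: 'a \<Rightarrow> ennreal) ((1/l) *\<^sub>R (z - d)) \<partial>lborel)"
      by (intro nn_integral_cong) (simp add: indicator_def)
    also have "\<dots> = ennreal (l ^ DIM('a)) * (\<integral>\<^sup>+x. indicator (cball (0::'a) R) x \<partial>lborel)"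
      by (rule nn_integral_rescale[OF _ l]) (intro borel_measurable_indicator borel_closed closed_cball)
    also have "\<dots> = ennreal (l ^ DIM('a) * m0)"
      using em l m00 by (simp add: ennreal_mult)
    finally show ?thesis .
  qed
  let ?i1 = "\<lambda>z. indicator (cball 0 R) ((1/lam) *\<^sub>R (z - c)) :: real"
  let ?i2 = "\<lambda>z. indicator (cball 0 R) ((1/lam') *\<^sub>R (z - c')) :: real"
  have "(\<integral>\<^sup>+z. ennreal (\<bar>Tr a lam c F z\<bar> * \<bar>Tr a lam' c' G z\<bar> ^ q) \<partial>lborel)
      \<le> (\<integral>\<^sup>+z. ennreal K * ennreal (?i1 z * ?i2 z) \<partial>lborel)"
    using cross_pointwise[OF bF bG lam q] K0
    by (intro nn_integral_mono) (simp add: K_def ennreal_mult[symmetric] ennreal_leI)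
  also have "\<dots> = ennreal K * (\<integral>\<^sup>+z. ennreal (?i1 z * ?i2 z) \<partial>lborel)"
    by (rule nn_integral_cmult) measurable
  finally have main: "(\<integral>\<^sup>+z. ennreal (\<bar>Tr a lam c F z\<bar> * \<bar>Tr a lam' c' G z\<bar> ^ q) \<partial>lborel)
      \<le> ennreal K * (\<integral>\<^sup>+z. ennreal (?i1 z * ?i2 z) \<partial>lborel)" .
  have powD: "l ^ DIM('a) = l powr (a * (real q + 1))" if "l > 0" for l :: real
    using that aD by (simp add: powr_realpow)
  show ?thesis
  proof (cases "lam \<le> lam'")
    case True
    have "(\<integral>\<^sup>+z. ennreal (?i1 z * ?i2 z) \<partial>lborel) \<le> (\<integral>\<^sup>+z. ennreal (?i1 z) \<partial>lborel)"
      by (intro nn_integral_mono) (simp add: indicator_def)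
    also have "\<dots> = ennreal (lam ^ DIM('a) * m0)" by (rule ind_int[OF lam(1)])
    finally have "ennreal K * (\<integral>\<^sup>+z. ennreal (?i1 z * ?i2 z) \<partial>lborel) \<le> ennreal K * ennreal (lam ^ DIM('a) * m0)"
      by (rule mult_left_mono) simp
    also have "\<dots> = ennreal (K * (lam ^ DIM('a) * m0))"
      by (rule ennreal_mult[symmetric]) (use K0 lam m00 in auto)
    finally have "ennreal K * (\<integral>\<^sup>+z. ennreal (?i1 z * ?i2 z) \<partial>lborel) \<le> ennreal (K * (lam ^ DIM('a) * m0))" .
    also have "K * (lam ^ DIM('a) * m0) = M ^ Suc q * m0 * (lam powr (-a) * lam' powr (-a * real q) * lam powr (a * (real q + 1)))"
      unfolding K_def powD[OF lam(1)] by (simp add: algebra_simps)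
    also have "\<dots> \<le> M ^ Suc q * m0 * exp (-a * \<bar>ln (lam / lam')\<bar>)"
      using pw_bound1[OF lam True a q] M0 m00 by (intro mult_left_mono) auto
    finally show ?thesis using main unfolding m0_def by (meson ennreal_leI order_trans)
  next
    case False
    have "(\<integral>\<^sup>+z. ennreal (?i1 z * ?i2 z) \<partial>lborel) \<le> (\<integral>\<^sup>+z. ennreal (?i2 z) \<partial>lborel)"
      by (intro nn_integral_mono) (simp add: indicator_def)
    also have "\<dots> = ennreal (lam' ^ DIM('a) * m0)" by (rule ind_int[OF lam(2)])
    finally have "ennreal K * (\<integral>\<^sup>+z. ennreal (?i1 z * ?i2 z) \<partial>lborel) \<le> ennreal K * ennreal (lam' ^ DIM('a) * m0)"
      by (rule mult_left_mono) simp
    also have "\<dots> = ennreal (K * (lam' ^ DIM('a) * m0))"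
      by (rule ennreal_mult[symmetric]) (use K0 lam m00 in auto)
    finally have "ennreal K * (\<integral>\<^sup>+z. ennreal (?i1 z * ?i2 z) \<partial>lborel) \<le> ennreal (K * (lam' ^ DIM('a) * m0))" .
    also have "K * (lam' ^ DIM('a) * m0) = M ^ Suc q * m0 * (lam powr (-a) * lam' powr (-a * real q) * lam' powr (a * (real q + 1)))"
      unfolding K_def powD[OF lam(2)] by (simp add: algebra_simps)
    also have "\<dots> \<le> M ^ Suc q * m0 * exp (-a * \<bar>ln (lam / lam')\<bar>)"
      using pw_bound2[OF lam _ a, of q] False M0 m00 by (intro mult_left_mono) auto
    finally show ?thesis using main unfolding m0_def by (meson ennreal_leI order_trans)
  qed
qed

lemma cross_int_disjoint:
  fixes F G :: "'a::euclidean_space \<Rightarrow> real"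
  assumes bF: "\<And>z. \<bar>F z\<bar> \<le> M" "\<And>z. norm z > R \<Longrightarrow> F z = 0"
    and bG: "\<And>z. \<bar>G z\<bar> \<le> M" "\<And>z. norm z > R \<Longrightarrow> G z = 0"
    and lam: "lam > 0" "lam' > 0" and q: "q \<ge> 1"
    and far: "dist c c' > R * (lam + lam')"
  shows "(\<integral>\<^sup>+z. ennreal (\<bar>Tr a lam c F z\<bar> * \<bar>Tr a lam' c' G z\<bar> ^ q) \<partial>lborel) = 0"
proof -
  have z0: "\<bar>Tr a lam c F z\<bar> * \<bar>Tr a lam' c' G z\<bar> ^ q = 0" for z
  proof -
    have "indicator (cball 0 R) ((1/lam) *\<^sub>R (z - c)) * indicator (cball 0 R) ((1/lam') *\<^sub>R (z - c')) = (0::real)"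
    proof (rule ccontr)
      assume "indicator (cball 0 R) ((1/lam) *\<^sub>R (z - c)) * indicator (cball 0 R) ((1/lam') *\<^sub>R (z - c')) \<noteq> (0::real)"
      hence "norm ((1/lam) *\<^sub>R (z - c)) \<le> R" "norm ((1/lam') *\<^sub>R (z - c')) \<le> R"
        by (auto simp: indicator_def split: if_splits)
      moreover have "norm ((1/lam) *\<^sub>R (z - c)) = norm (z - c) / lam"
        "norm ((1/lam') *\<^sub>R (z - c')) = norm (z - c') / lam'" using lam by simp_all
      ultimately have "norm (z - c) \<le> R * lam" "norm (z - c') \<le> R * lam'"
        using lam by (simp_all add: divide_le_eq mult.commute)
      hence "dist c c' \<le> R * lam + R * lam'"
        by (metis add_mono dist_commute dist_norm dist_triangle order_trans)
      thus False using far by (simp add: algebra_simps)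
    qed
    moreover have "\<bar>Tr a lam c F z\<bar> * \<bar>Tr a lam' c' G z\<bar> ^ q \<le>
     (M ^ Suc q * (lam powr (-a) * lam' powr (-a * real q))) *
       (indicator (cball 0 R) ((1/lam) *\<^sub>R (z - c)) * indicator (cball 0 R) ((1/lam') *\<^sub>R (z - c')))"
      by (rule cross_pointwise[OF bF bG lam q])
    moreover have "\<bar>Tr a lam c F z\<bar> * \<bar>Tr a lam' c' G z\<bar> ^ q \<ge> 0" by simp
    ultimately show ?thesis by (metis mult_zero_right order_antisym)
  qed
  show ?thesis by (simp only: z0 ennreal_0) simp
qed



lemma exp_small:
  fixes C0 a e :: real assumes "C0 \<ge> 0" "a > 0" "e > 0"
  obtains K0 where "K0 \<ge> 0" "\<And>x. x \<ge> K0 \<Longrightarrow> C0 * exp (-a * x) < e"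
proof -
  define K0 where "K0 = \<bar>ln ((C0 + 1) / e)\<bar> / a"
  have K0: "K0 \<ge> 0" using assms by (simp add: K0_def)
  have "C0 * exp (-a * x) < e" if x: "x \<ge> K0" for x
  proof -
    have "-a * x \<le> -a * K0" using x assms by simp
    also have "-a * K0 = - \<bar>ln ((C0 + 1) / e)\<bar>" using assms by (simp add: K0_def)
    also have "\<dots> \<le> - ln ((C0 + 1) / e)" by simp
    finally have "exp (-a * x) \<le> exp (- ln ((C0 + 1) / e))" by simp
    also have "\<dots> = e / (C0 + 1)" using assms by (simp add: exp_minus)
    finally have "C0 * exp (-a * x) \<le> C0 * (e / (C0 + 1))"
      using assms by (intro mult_left_mono) auto
    also have "\<dots> < e" using assms by (simp add: field_simps)
    finally show ?thesis .
  qed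
  thus ?thesis using that K0 by blast
qed

lemma cross_bdd_tendsto:
  fixes F G :: "'a::euclidean_space \<Rightarrow> real"
  assumes [measurable]: "F \<in> borel_measurable borel" "G \<in> borel_measurable borel"
    and bF: "\<And>z. \<bar>F z\<bar> \<le> M" "\<And>z. norm z > R \<Longrightarrow> F z = 0"
    and bG: "\<And>z. \<bar>G z\<bar> \<le> M" "\<And>z. norm z > R \<Longrightarrow> G z = 0"
    and R: "R \<ge> 0"
    and lam: "\<And>n. lam n > 0" "\<And>n. lam' n > 0" and q: "q \<ge> 1" and a: "a > 0"
    and aD: "a * (real q + 1) = real DIM('a)"
    and orth: "filterlim (\<lambda>n. \<bar>ln (lam n / lam' n)\<bar> + dist (c n) (c' n) / lam n) at_top sequentially"
  shows "(\<lambda>n. \<integral>\<^sup>+z. ennreal (\<bar>Tr a (lam n) (c n) F z\<bar> * \<bar>Tr a (lam' n) (c' n) G z\<bar> ^ q) \<partial>lborel) \<longlonglongrightarrow> 0"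
proof -
  define C0 where "C0 = M ^ Suc q * measure lborel (cball (0::'a) R)"
  have M0: "M \<ge> 0" using bF(1)[of 0] by simp
  have C00: "C0 \<ge> 0" unfolding C0_def using M0 by simp
  define b where "b n = (if dist (c n) (c' n) > R * (lam n + lam' n) then 0
      else C0 * exp (-a * \<bar>ln (lam n / lam' n)\<bar>))" for n
  have fb: "(\<integral>\<^sup>+z. ennreal (\<bar>Tr a (lam n) (c n) F z\<bar> * \<bar>Tr a (lam' n) (c' n) G z\<bar> ^ q) \<partial>lborel) \<le> ennreal (b n)" for n
  proof (cases "dist (c n) (c' n) > R * (lam n + lam' n)")
    case True
    thus ?thesis using cross_int_disjoint[OF bF bG lam(1)[of n] lam(2)[of n] q True] by simp
  next
    case False
    thus ?thesis using cross_int_bound[OF _ _ bF bG lam(1)[of n] lam(2)[of n] q a aD]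
      unfolding b_def C0_def by simp
  qed
  have b0: "b n \<ge> 0" for n unfolding b_def using C00 by simp
  have "b \<longlonglongrightarrow> 0"
  proof (rule tendstoI)
    fix e :: real assume e: "e > 0"
    obtain K0 where K0: "K0 \<ge> 0" "\<And>x. x \<ge> K0 \<Longrightarrow> C0 * exp (-a * x) < e"
      using exp_small[OF C00 a e] by blast
    define L where "L = K0 + R * (1 + exp K0) + 1"
    have ev: "eventually (\<lambda>n. L < \<bar>ln (lam n / lam' n)\<bar> + dist (c n) (c' n) / lam n) sequentially"
      using orth by (simp add: filterlim_at_top_dense)
    show "eventually (\<lambda>n. dist (b n) 0 < e) sequentially"
      using ev
    proof eventually_elim
      case (elim n)
      show ?case
      proof (cases "dist (c n) (c' n) > R * (lam n + lam' n)")
        case True thus ?thesis using e by (simp add: b_def)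
      next
        case False
        have "\<bar>ln (lam n / lam' n)\<bar> \<ge> K0"
        proof (rule ccontr)
          assume "\<not> K0 \<le> \<bar>ln (lam n / lam' n)\<bar>"
          hence lt: "\<bar>ln (lam n / lam' n)\<bar> < K0" by simp
          hence "ln (lam n / lam' n) > - K0" by simp
          hence "exp (- K0) < lam n / lam' n"
            using lam[of n] by (metis exp_less_cancel_iff exp_ln divide_pos_pos)
          hence "exp (- K0) * lam' n < lam n" using lam[of n] by (simp add: field_simps)
          hence "lam' n < exp K0 * lam n" by (simp add: exp_minus field_simps)
          hence l2: "R * lam' n \<le> R * (exp K0 * lam n)" using R by (intro mult_left_mono) auto
          have "dist (c n) (c' n) / lam n > L - K0" using elim lt by simp
          hence "dist (c n) (c' n) > (L - K0) * lam n" using lam[of n] by (simp add: field_simps)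
          also have "(L - K0) * lam n = R * lam n + R * (exp K0 * lam n) + lam n"
            unfolding L_def by (simp add: algebra_simps)
          finally have "dist (c n) (c' n) > R * (lam n + lam' n)"
            using l2 lam[of n] by (simp add: algebra_simps)
          thus False using False by simp
        qed
        hence "b n < e" using K0(2) False by (simp add: b_def)
        thus ?thesis using b0[of n] by simp
      qed
    qed
  qed
  hence bt: "(\<lambda>n. ennreal (b n)) \<longlonglongrightarrow> 0" using b0 by (simp add: ennreal_tendsto_0_iff)
  show ?thesis
    by (rule tendsto_sandwich[of "\<lambda>n. 0" _ _ "\<lambda>n. ennreal (b n)"]) (use fb bt in auto)
qed



lemma Tr_meas[measurable]:
  fixes F :: "'a::euclidean_space \<Rightarrow> real"
  assumes [measurable]: "F \<in> borel_measurable borel"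
  shows "Tr a lam c F \<in> borel_measurable borel"
  unfolding Tr_def by measurable

lemma young_q:
  fixes x y l :: real assumes "x \<ge> 0" "y \<ge> 0" "l > 0"
  shows "x * y ^ q \<le> l ^ q * x ^ Suc q + (1 / l) * y ^ Suc q"
proof (cases "y \<le> l * x")
  case True
  have "x * y ^ q \<le> x * (l * x) ^ q" using assms True by (intro mult_left_mono power_mono) auto
  also have "\<dots> = l ^ q * x ^ Suc q" by (simp add: power_mult_distrib)
  finally show ?thesis using assms by (smt (verit) divide_nonneg_pos mult_nonneg_nonneg zero_le_power)
next
  case False
  hence "x \<le> y / l" using assms by (simp add: field_simps)
  hence "x * y ^ q \<le> (y / l) * y ^ q" using assms by (intro mult_right_mono) auto
  also have "\<dots> = (1 / l) * y ^ Suc q" by simp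
  finally show ?thesis using assms by (smt (verit) mult_nonneg_nonneg zero_le_power)
qed

lemma split3:
  fixes x y s t :: real assumes "s = 0 \<or> s = 1" "t = 0 \<or> t = 1"
  shows "\<bar>x\<bar> * \<bar>y\<bar> ^ q \<le> \<bar>x * s\<bar> * \<bar>y * t\<bar> ^ q + \<bar>x * (1 - s)\<bar> * \<bar>y\<bar> ^ q + \<bar>x\<bar> * \<bar>y * (1 - t)\<bar> ^ q"
  using assms by auto

lemma ennreal_tendsto_0I:
  assumes "\<And>e. e > 0 \<Longrightarrow> eventually (\<lambda>n. f n \<le> ennreal e) F"
  shows "(f \<longlongrightarrow> (0::ennreal)) F"
proof (rule order_tendstoI)
  fix u :: ennreal assume u: "u > 0"
  obtain e where e: "e > 0" "ennreal e < u"
  proof (cases u)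
    case (real r)
    thus ?thesis using that[of "r/2"] u by (simp add: ennreal_lessI)
  next
    case top
    thus ?thesis using that[of 1] by simp
  qed
  show "eventually (\<lambda>n. f n < u) F"
    using assms[OF e(1)] by eventually_elim (use e in auto)
qed simp



lemma young_int:
  fixes X Y :: "'a::euclidean_space \<Rightarrow> real"
  assumes [measurable]: "X \<in> borel_measurable borel" "Y \<in> borel_measurable borel" and l: "l > 0"
  shows "(\<integral>\<^sup>+z. ennreal (\<bar>X z\<bar> * \<bar>Y z\<bar> ^ q) \<partial>lborel)
     \<le> ennreal (l ^ q) * Sp (Suc q) X + ennreal (1 / l) * Sp (Suc q) Y"
proof -
  have "(\<integral>\<^sup>+z. ennreal (\<bar>X z\<bar> * \<bar>Y z\<bar> ^ q) \<partial>lborel)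
      \<le> (\<integral>\<^sup>+z. ennreal (l ^ q) * ennreal (\<bar>X z\<bar> ^ Suc q) + ennreal (1 / l) * ennreal (\<bar>Y z\<bar> ^ Suc q) \<partial>lborel)"
  proof (rule nn_integral_mono)
    fix z
    have "\<bar>X z\<bar> * \<bar>Y z\<bar> ^ q \<le> l ^ q * \<bar>X z\<bar> ^ Suc q + (1 / l) * \<bar>Y z\<bar> ^ Suc q"
      by (rule young_q) (use l in auto)
    hence "ennreal (\<bar>X z\<bar> * \<bar>Y z\<bar> ^ q) \<le> ennreal (l ^ q * \<bar>X z\<bar> ^ Suc q + (1 / l) * \<bar>Y z\<bar> ^ Suc q)"
      by (rule ennreal_leI)
    also have "\<dots> = ennreal (l ^ q) * ennreal (\<bar>X z\<bar> ^ Suc q) + ennreal (1 / l) * ennreal (\<bar>Y z\<bar> ^ Suc q)"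
      using l by (simp add: ennreal_plus[symmetric] ennreal_mult[symmetric] del: ennreal_plus)
    finally show "ennreal (\<bar>X z\<bar> * \<bar>Y z\<bar> ^ q) \<le> ennreal (l ^ q) * ennreal (\<bar>X z\<bar> ^ Suc q) + ennreal (1 / l) * ennreal (\<bar>Y z\<bar> ^ Suc q)" .
  qed
  also have "\<dots> = (\<integral>\<^sup>+z. ennreal (l ^ q) * ennreal (\<bar>X z\<bar> ^ Suc q) \<partial>lborel) + (\<integral>\<^sup>+z. ennreal (1 / l) * ennreal (\<bar>Y z\<bar> ^ Suc q) \<partial>lborel)"
    by (rule nn_integral_add) measurable
  also have "\<dots> = ennreal (l ^ q) * Sp (Suc q) X + ennreal (1 / l) * Sp (Suc q) Y"
    unfolding Sp_def by (simp add: nn_integral_cmult)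
  finally show ?thesis .
qed



lemma cross_tendsto:
  fixes F G :: "'a::euclidean_space \<Rightarrow> real"
  assumes [measurable]: "F \<in> borel_measurable borel" "G \<in> borel_measurable borel"
    and finF: "Sp (Suc q) F < \<infinity>" and finG: "Sp (Suc q) G < \<infinity>"
    and lam: "\<And>n. lam n > 0" "\<And>n. lam' n > 0" and q: "q \<ge> 1" and a: "a > 0"
    and aD: "a * (real q + 1) = real DIM('a)"
    and orth: "filterlim (\<lambda>n. \<bar>ln (lam n / lam' n)\<bar> + dist (c n) (c' n) / lam n) at_top sequentially"
  shows "(\<lambda>n. \<integral>\<^sup>+z. ennreal (\<bar>Tr a (lam n) (c n) F z\<bar> * \<bar>Tr a (lam' n) (c' n) G z\<bar> ^ q) \<partial>lborel) \<longlonglongrightarrow> 0"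
proof (rule ennreal_tendsto_0I)
  fix e :: real assume e: "e > 0"
  define SF where "SF = enn2real (Sp (Suc q) F)"
  define SG where "SG = enn2real (Sp (Suc q) G)"
  have SF: "Sp (Suc q) F = ennreal SF" "SF \<ge> 0" using finF by (simp_all add: SF_def ennreal_enn2real)
  have SG: "Sp (Suc q) G = ennreal SG" "SG \<ge> 0" using finG by (simp_all add: SG_def ennreal_enn2real)
  define l where "l = 8 * (SG + 1) / e"
  have l0: "l > 0" using SG e by (simp add: l_def)
  define mu where "mu = root q (e / (8 * (SF + 1)))"
  have mu0: "mu > 0" using SF e q by (simp add: mu_def)
  have muq: "mu ^ q = e / (8 * (SF + 1))" using SF e q by (simp add: mu_def real_root_pow_pos)
  obtain M1 R1 where tF: "Sp (Suc q) (\<lambda>z. F z * indicator {z. \<not> (\<bar>F z\<bar> \<le> M1 \<and> norm z \<le> R1)} z) < ennreal (e / (8 * l ^ q))"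
    using trunc_small[of F "Suc q" "e / (8 * l ^ q)"] finF e l0 by auto
  obtain M2 R2 where tG: "Sp (Suc q) (\<lambda>z. G z * indicator {z. \<not> (\<bar>G z\<bar> \<le> M2 \<and> norm z \<le> R2)} z) < ennreal (e * mu / 8)"
    using trunc_small[of G "Suc q" "e * mu / 8"] finG e mu0 by auto
  define M where "M = max (max M1 M2) 0"
  define R where "R = max (max R1 R2) 0"
  define s where "s z = (indicator {z. \<bar>F z\<bar> \<le> M1 \<and> norm z \<le> R1} z :: real)" for z
  define t where "t z = (indicator {z. \<bar>G z\<bar> \<le> M2 \<and> norm z \<le> R2} z :: real)" for z
  define F1 where "F1 z = F z * s z" for z
  define F2 where "F2 z = F z * (1 - s z)" for z
  define G1 where "G1 z = G z * t z" for z
  define G2 where "G2 z = G z * (1 - t z)" for z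
  have [measurable]: "s \<in> borel_measurable borel" "t \<in> borel_measurable borel"
    unfolding s_def[abs_def] t_def[abs_def] by measurable
  have [measurable]: "F1 \<in> borel_measurable borel" "F2 \<in> borel_measurable borel"
    "G1 \<in> borel_measurable borel" "G2 \<in> borel_measurable borel"
    unfolding F1_def[abs_def] F2_def[abs_def] G1_def[abs_def] G2_def[abs_def] by measurable
  have bF1: "\<bar>F1 z\<bar> \<le> M" "norm z > R \<Longrightarrow> F1 z = 0" for z
    unfolding F1_def s_def M_def R_def by (auto simp: indicator_def)
  have bG1: "\<bar>G1 z\<bar> \<le> M" "norm z > R \<Longrightarrow> G1 z = 0" for z
    unfolding G1_def t_def M_def R_def by (auto simp: indicator_def)
  have R0: "R \<ge> 0" by (simp add: R_def)
  have SF2: "Sp (Suc q) F2 < ennreal (e / (8 * l ^ q))"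
  proof -
    have "Sp (Suc q) F2 = Sp (Suc q) (\<lambda>z. F z * indicator {z. \<not> (\<bar>F z\<bar> \<le> M1 \<and> norm z \<le> R1)} z)"
      unfolding Sp_def F2_def s_def by (intro nn_integral_cong) (simp add: indicator_def)
    thus ?thesis using tF by simp
  qed
  have SG2: "Sp (Suc q) G2 < ennreal (e * mu / 8)"
  proof -
    have "Sp (Suc q) G2 = Sp (Suc q) (\<lambda>z. G z * indicator {z. \<not> (\<bar>G z\<bar> \<le> M2 \<and> norm z \<le> R2)} z)"
      unfolding Sp_def G2_def t_def by (intro nn_integral_cong) (simp add: indicator_def)
    thus ?thesis using tG by simp
  qed
  define I where "I n = (\<integral>\<^sup>+z. ennreal (\<bar>Tr a (lam n) (c n) F z\<bar> * \<bar>Tr a (lam' n) (c' n) G z\<bar> ^ q) \<partial>lborel)" for n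
  define I1 where "I1 n = (\<integral>\<^sup>+z. ennreal (\<bar>Tr a (lam n) (c n) F1 z\<bar> * \<bar>Tr a (lam' n) (c' n) G1 z\<bar> ^ q) \<partial>lborel)" for n
  define I2 where "I2 n = (\<integral>\<^sup>+z. ennreal (\<bar>Tr a (lam n) (c n) F2 z\<bar> * \<bar>Tr a (lam' n) (c' n) G z\<bar> ^ q) \<partial>lborel)" for n
  define I3 where "I3 n = (\<integral>\<^sup>+z. ennreal (\<bar>Tr a (lam n) (c n) F z\<bar> * \<bar>Tr a (lam' n) (c' n) G2 z\<bar> ^ q) \<partial>lborel)" for n
  have Isplit: "I n \<le> I1 n + I2 n + I3 n" for n
  proof -
    have "I n \<le> (\<integral>\<^sup>+z. ennreal (\<bar>Tr a (lam n) (c n) F1 z\<bar> * \<bar>Tr a (lam' n) (c' n) G1 z\<bar> ^ q)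
        + ennreal (\<bar>Tr a (lam n) (c n) F2 z\<bar> * \<bar>Tr a (lam' n) (c' n) G z\<bar> ^ q)
        + ennreal (\<bar>Tr a (lam n) (c n) F z\<bar> * \<bar>Tr a (lam' n) (c' n) G2 z\<bar> ^ q) \<partial>lborel)"
      unfolding I_def
    proof (rule nn_integral_mono)
      fix z
      define w where "w = (1 / lam n) *\<^sub>R (z - c n)"
      define w' where "w' = (1 / lam' n) *\<^sub>R (z - c' n)"
      have e1: "Tr a (lam n) (c n) F1 z = Tr a (lam n) (c n) F z * s w"
        "Tr a (lam n) (c n) F2 z = Tr a (lam n) (c n) F z * (1 - s w)"
        "Tr a (lam' n) (c' n) G1 z = Tr a (lam' n) (c' n) G z * t w'"
        "Tr a (lam' n) (c' n) G2 z = Tr a (lam' n) (c' n) G z * (1 - t w')"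
        unfolding Tr_def F1_def F2_def G1_def G2_def w_def w'_def by simp_all
      have st: "s w = 0 \<or> s w = 1" "t w' = 0 \<or> t w' = 1" by (auto simp: s_def t_def indicator_def)
      show "ennreal (\<bar>Tr a (lam n) (c n) F z\<bar> * \<bar>Tr a (lam' n) (c' n) G z\<bar> ^ q) \<le> 
        ennreal (\<bar>Tr a (lam n) (c n) F1 z\<bar> * \<bar>Tr a (lam' n) (c' n) G1 z\<bar> ^ q)
        + ennreal (\<bar>Tr a (lam n) (c n) F2 z\<bar> * \<bar>Tr a (lam' n) (c' n) G z\<bar> ^ q)
        + ennreal (\<bar>Tr a (lam n) (c n) F z\<bar> * \<bar>Tr a (lam' n) (c' n) G2 z\<bar> ^ q)"
        unfolding e1 using split3[OF st, of "Tr a (lam n) (c n) F z" "Tr a (lam' n) (c' n) G z" q]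
        by (simp add: ennreal_plus[symmetric] del: ennreal_plus)
    qed
    also have "\<dots> = I1 n + I2 n + I3 n"
      unfolding I1_def I2_def I3_def
      by (simp add: nn_integral_add)
    finally show ?thesis .
  qed
  have I2b: "I2 n \<le> ennreal (e / 4)" for n
  proof -
    have "I2 n \<le> ennreal (l ^ q) * Sp (Suc q) (Tr a (lam n) (c n) F2) + ennreal (1 / l) * Sp (Suc q) (Tr a (lam' n) (c' n) G)"
      unfolding I2_def by (rule young_int[OF _ _ l0]) measurable
    also have "\<dots> = ennreal (l ^ q) * Sp (Suc q) F2 + ennreal (1 / l) * ennreal SG"
      using lam aD SG by (simp add: Sp_Tr algebra_simps)
    also have "\<dots> \<le> ennreal (l ^ q) * ennreal (e / (8 * l ^ q)) + ennreal (1 / l) * ennreal SG"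
      using SF2 by (intro add_mono mult_left_mono) auto
    also have "\<dots> = ennreal (e / 8 + SG / l)"
      using l0 SG e by (simp add: ennreal_mult[symmetric] ennreal_plus[symmetric] del: ennreal_plus)
    also have "e / 8 + SG / l \<le> e / 4"
    proof -
      have "SG / l = SG * e / (8 * (SG + 1))" using e SG by (simp add: l_def field_simps)
      also have "\<dots> \<le> e / 8" using e SG by (simp add: field_simps)
      finally show ?thesis by linarith
    qed
    finally show ?thesis by (simp add: ennreal_leI)
  qed
  have I3b: "I3 n \<le> ennreal (e / 4)" for n
  proof -
    have "I3 n \<le> ennreal (mu ^ q) * Sp (Suc q) (Tr a (lam n) (c n) F) + ennreal (1 / mu) * Sp (Suc q) (Tr a (lam' n) (c' n) G2)"
      unfolding I3_def by (rule young_int[OF _ _ mu0]) measurable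
    also have "\<dots> = ennreal (mu ^ q) * ennreal SF + ennreal (1 / mu) * Sp (Suc q) G2"
      using lam aD SF by (simp add: Sp_Tr algebra_simps)
    also have "\<dots> \<le> ennreal (mu ^ q) * ennreal SF + ennreal (1 / mu) * ennreal (e * mu / 8)"
      using SG2 by (intro add_mono mult_left_mono) auto
    also have "\<dots> = ennreal (mu ^ q * SF + e / 8)"
      using mu0 SF e by (simp add: ennreal_mult[symmetric] ennreal_plus[symmetric] del: ennreal_plus)
    also have "mu ^ q * SF + e / 8 \<le> e / 4"
    proof -
      have "mu ^ q * SF = e * SF / (8 * (SF + 1))" unfolding muq using SF by simp
      also have "\<dots> \<le> e / 8" using e SF by (simp add: field_simps)
      finally show ?thesis by linarith
    qed
    finally show ?thesis by (simp add: ennreal_leI)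
  qed
  have "I1 \<longlonglongrightarrow> 0"
    unfolding I1_def
    by (rule cross_bdd_tendsto[OF _ _ bF1 bG1 R0 lam q a aD orth]) measurable
  hence "eventually (\<lambda>n. I1 n < ennreal (e / 4)) sequentially"
    using e by (intro order_tendstoD(2)) auto
  thus "eventually (\<lambda>n. I n \<le> ennreal e) sequentially"
  proof eventually_elim
    case (elim n)
    have "I n \<le> I1 n + I2 n + I3 n" by (rule Isplit)
    also have "\<dots> \<le> ennreal (e / 4) + ennreal (e / 4) + ennreal (e / 4)"
      using elim I2b[of n] I3b[of n] by (intro add_mono) auto
    also have "\<dots> = ennreal (3 * e / 4)"
      using e by (simp add: ennreal_plus[symmetric] del: ennreal_plus)
    also have "\<dots> \<le> ennreal e" using e by (intro ennreal_leI) simp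
    finally show ?case .
  qed
qed



lemma sum_bound:
  fixes V :: "nat \<Rightarrow> 'a::euclidean_space \<Rightarrow> real" and lam :: "nat \<Rightarrow> nat \<Rightarrow> real"
    and c :: "nat \<Rightarrow> nat \<Rightarrow> 'a" and Fs :: "nat set" and d :: real
  assumes Fs: "finite Fs"
    and meas: "\<And>j. j \<in> Fs \<Longrightarrow> V j \<in> borel_measurable borel"
    and fin: "\<And>j. j \<in> Fs \<Longrightarrow> Sp (Suc q) (V j) < \<infinity>"
    and lam: "\<And>j n. j \<in> Fs \<Longrightarrow> lam j n > 0" and q: "q \<ge> 1" and a: "a > 0"
    and aD: "a * (real q + 1) = real DIM('a)"
    and orth: "\<And>j k. j \<in> Fs \<Longrightarrow> k \<in> Fs \<Longrightarrow> j \<noteq> k \<Longrightarrow>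
       filterlim (\<lambda>n. \<bar>ln (lam j n / lam k n)\<bar> + dist (c j n) (c k n) / lam j n) at_top sequentially"
    and d: "d > 0"
  shows "eventually (\<lambda>n. Sp (Suc q) (\<lambda>z. \<Sum>j\<in>Fs. Tr a (lam j n) (c j n) (V j) z)
            \<le> (\<Sum>j\<in>Fs. Sp (Suc q) (V j)) + ennreal d) sequentially"
proof -
  define T where "T j n = Tr a (lam j n) (c j n) (V j)" for j n
  have Tm[measurable]: "T j n \<in> borel_measurable borel" if "j \<in> Fs" for j n
    unfolding T_def using meas[OF that] by measurable
  have m1: "(\<lambda>z. ennreal (\<bar>T j n z\<bar> ^ Suc q)) \<in> borel_measurable lborel" if "j \<in> Fs" for j n
    using Tm[OF that] by measurable
  have m2: "(\<lambda>z. ennreal (\<bar>T j n z\<bar> * \<bar>T k n z\<bar> ^ q)) \<in> borel_measurable lborel" if "j \<in> Fs" "k \<in> Fs - {j}" for j k n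
  proof -
    have "k \<in> Fs" using that by auto
    note [measurable] = Tm[OF that(1)] Tm[OF this]
    show ?thesis by measurable
  qed
  define Cc where "Cc = real (Suc q) * real (card Fs) ^ q"
  have Cc0: "Cc \<ge> 0" by (simp add: Cc_def)
  define X where "X j k n = (\<integral>\<^sup>+z. ennreal (\<bar>T j n z\<bar> * \<bar>T k n z\<bar> ^ q) \<partial>lborel)" for j k n
  have bnd: "Sp (Suc q) (\<lambda>z. \<Sum>j\<in>Fs. T j n z) \<le> (\<Sum>j\<in>Fs. Sp (Suc q) (V j)) + ennreal Cc * (\<Sum>j\<in>Fs. \<Sum>k\<in>Fs - {j}. X j k n)" for n
  proof -
    have pw: "ennreal (\<bar>\<Sum>j\<in>Fs. T j n z\<bar> ^ Suc q) \<le> (\<Sum>j\<in>Fs. ennreal (\<bar>T j n z\<bar> ^ Suc q))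
        + ennreal Cc * (\<Sum>j\<in>Fs. \<Sum>k\<in>Fs - {j}. ennreal (\<bar>T j n z\<bar> * \<bar>T k n z\<bar> ^ q))" for z
    proof -
      have "\<bar>\<Sum>j\<in>Fs. T j n z\<bar> ^ Suc q \<le> (\<Sum>j\<in>Fs. \<bar>T j n z\<bar>) ^ Suc q"
        by (intro power_mono sum_abs) simp
      also have "\<dots> \<le> (\<Sum>j\<in>Fs. \<bar>T j n z\<bar> ^ Suc q) + Cc * (\<Sum>j\<in>Fs. \<Sum>k\<in>Fs - {j}. \<bar>T j n z\<bar> * \<bar>T k n z\<bar> ^ q)"
        unfolding Cc_def by (rule alg_ineq[OF Fs]) simp
      finally have "ennreal (\<bar>\<Sum>j\<in>Fs. T j n z\<bar> ^ Suc q) \<le> ennreal ((\<Sum>j\<in>Fs. \<bar>T j n z\<bar> ^ Suc q) + Cc * (\<Sum>j\<in>Fs. \<Sum>k\<in>Fs - {j}. \<bar>T j n z\<bar> * \<bar>T k n z\<bar> ^ q))"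
        by (rule ennreal_leI)
      also have "\<dots> = (\<Sum>j\<in>Fs. ennreal (\<bar>T j n z\<bar> ^ Suc q))
        + ennreal Cc * (\<Sum>j\<in>Fs. \<Sum>k\<in>Fs - {j}. ennreal (\<bar>T j n z\<bar> * \<bar>T k n z\<bar> ^ q))"
        using Cc0 by (simp add: ennreal_plus[symmetric] ennreal_mult[symmetric] sum_nonneg del: ennreal_plus)
      finally show ?thesis .
    qed
    have "Sp (Suc q) (\<lambda>z. \<Sum>j\<in>Fs. T j n z) \<le> (\<integral>\<^sup>+z. (\<Sum>j\<in>Fs. ennreal (\<bar>T j n z\<bar> ^ Suc q))
        + ennreal Cc * (\<Sum>j\<in>Fs. \<Sum>k\<in>Fs - {j}. ennreal (\<bar>T j n z\<bar> * \<bar>T k n z\<bar> ^ q)) \<partial>lborel)"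
      unfolding Sp_def by (intro nn_integral_mono pw)
    also have "\<dots> = (\<integral>\<^sup>+z. (\<Sum>j\<in>Fs. ennreal (\<bar>T j n z\<bar> ^ Suc q)) \<partial>lborel)
        + (\<integral>\<^sup>+z. ennreal Cc * (\<Sum>j\<in>Fs. \<Sum>k\<in>Fs - {j}. ennreal (\<bar>T j n z\<bar> * \<bar>T k n z\<bar> ^ q)) \<partial>lborel)"
      by (rule nn_integral_add) (auto intro!: borel_measurable_sum borel_measurable_times_ennreal m1 m2)
    also have "(\<integral>\<^sup>+z. (\<Sum>j\<in>Fs. ennreal (\<bar>T j n z\<bar> ^ Suc q)) \<partial>lborel) = (\<Sum>j\<in>Fs. Sp (Suc q) (T j n))"
      unfolding Sp_def by (rule nn_integral_sum) (auto intro!: m1)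
    also have "\<dots> = (\<Sum>j\<in>Fs. Sp (Suc q) (V j))"
      unfolding T_def using meas lam aD by (intro sum.cong refl Sp_Tr) (auto simp: algebra_simps)
    also have "(\<integral>\<^sup>+z. ennreal Cc * (\<Sum>j\<in>Fs. \<Sum>k\<in>Fs - {j}. ennreal (\<bar>T j n z\<bar> * \<bar>T k n z\<bar> ^ q)) \<partial>lborel)
        = ennreal Cc * (\<integral>\<^sup>+z. (\<Sum>j\<in>Fs. \<Sum>k\<in>Fs - {j}. ennreal (\<bar>T j n z\<bar> * \<bar>T k n z\<bar> ^ q)) \<partial>lborel)"
      by (rule nn_integral_cmult) (auto intro!: borel_measurable_sum borel_measurable_times_ennreal m1 m2)
    also have "(\<integral>\<^sup>+z. (\<Sum>j\<in>Fs. \<Sum>k\<in>Fs - {j}. ennreal (\<bar>T j n z\<bar> * \<bar>T k n z\<bar> ^ q)) \<partial>lborel)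
        = (\<Sum>j\<in>Fs. \<integral>\<^sup>+z. (\<Sum>k\<in>Fs - {j}. ennreal (\<bar>T j n z\<bar> * \<bar>T k n z\<bar> ^ q)) \<partial>lborel)"
      by (rule nn_integral_sum) (auto intro!: borel_measurable_sum borel_measurable_times_ennreal m1 m2)
    also have "\<dots> = (\<Sum>j\<in>Fs. \<Sum>k\<in>Fs - {j}. X j k n)"
      unfolding X_def by (intro sum.cong refl nn_integral_sum) (auto intro!: m2)
    finally show ?thesis .
  qed
  have Xt: "(\<lambda>n. X j k n) \<longlonglongrightarrow> 0" if "j \<in> Fs" "k \<in> Fs - {j}" for j k
    unfolding X_def T_def
    using that meas fin lam orth
    by (intro cross_tendsto[OF _ _ _ _ _ _ q a aD]) auto
  have "(\<lambda>n. \<Sum>j\<in>Fs. \<Sum>k\<in>Fs - {j}. X j k n) \<longlonglongrightarrow> (\<Sum>j\<in>Fs. \<Sum>k\<in>Fs - {j}. 0)"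
    by (intro tendsto_sum Xt)
  hence "(\<lambda>n. ennreal Cc * (\<Sum>j\<in>Fs. \<Sum>k\<in>Fs - {j}. X j k n)) \<longlonglongrightarrow> ennreal Cc * 0"
    by (intro ennreal_tendsto_cmult) auto
  hence "eventually (\<lambda>n. ennreal Cc * (\<Sum>j\<in>Fs. \<Sum>k\<in>Fs - {j}. X j k n) < ennreal d) sequentially"
    using d by (intro order_tendstoD(2)) auto
  thus ?thesis
  proof eventually_elim
    case (elim n)
    show ?case using bnd[of n] elim unfolding T_def
      by (meson add_left_mono less_imp_le order_trans)
  qed
qed



definition uc :: "(real \<Rightarrow> real^'n \<Rightarrow> real) \<Rightarrow> real \<times> (real^'n) \<Rightarrow> real" where
  "uc f = (\<lambda>z. f (fst z) (snd z))"

lemma Snorm_p_Sp: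
  assumes "CARD('n) \<in> {3,4,5}"
  shows "Snorm_p (f :: real \<Rightarrow> real^'n \<Rightarrow> real) = Sp (pexp CARD('n)) (uc f)"
proof -
  have P: "pexp CARD('n) \<noteq> 0" using exps(4)[OF assms] by simp
  show ?thesis unfolding Snorm_p_def Sp_def uc_def exps(1)[OF assms]
    using P by (intro nn_integral_cong) (simp add: powr_realpow')
qed

lemma Snorm_less:
  assumes "CARD('n) \<in> {3,4,5}" and "Snorm (f :: real \<Rightarrow> real^'n \<Rightarrow> real) < ennreal e"
  shows "Snorm_p f \<le> ennreal (e ^ pexp CARD('n))"
proof -
  define P where "P = pexp CARD('n)"
  have P: "P \<noteq> 0" using exps(4)[OF assms(1)] by (simp add: P_def)
  have fin: "Snorm_p f \<noteq> \<infinity>" using assms(2) by (auto simp: Snorm_def)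
  define r where "r = enn2real (Snorm_p f)"
  have r0: "r \<ge> 0" by (simp add: r_def)
  have Sr: "Snorm_p f = ennreal r" using fin by (simp add: r_def ennreal_enn2real_if)
  have "ennreal (r powr (1 / real P)) < ennreal e"
    using assms(2) fin unfolding Snorm_def exps(1)[OF assms(1)] P_def r_def by simp
  hence lt: "r powr (1 / real P) < e" by (simp add: ennreal_less_iff)
  have "r = (r powr (1 / real P)) ^ P"
    using P r0 by (simp add: powr_realpow'[symmetric] powr_powr)
  also have "\<dots> \<le> e ^ P" using lt by (intro power_mono) auto
  finally show ?thesis unfolding Sr P_def by (intro ennreal_leI)
qed

lemma Snorm_le:
  assumes "CARD('n) \<in> {3,4,5}" and "e \<ge> 0" and "Snorm_p (f :: real \<Rightarrow> real^'n \<Rightarrow> real) \<le> ennreal (e ^ pexp CARD('n))"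
  shows "Snorm f \<le> ennreal e"
proof -
  define P where "P = pexp CARD('n)"
  have P: "P \<noteq> 0" using exps(4)[OF assms(1)] by (simp add: P_def)
  have fin: "Snorm_p f \<noteq> \<infinity>"
    using assms(3) ennreal_less_top[of "e ^ pexp CARD('n)"] by (metis infinity_ennreal_def leD)
  define r where "r = enn2real (Snorm_p f)"
  have r0: "r \<ge> 0" by (simp add: r_def)
  have Sr: "Snorm_p f = ennreal r" using fin by (simp add: r_def ennreal_enn2real_if)
  have rle: "r \<le> e ^ P" using assms(3) assms(2) unfolding Sr P_def by simp
  have "r powr (1 / real P) \<le> (e ^ P) powr (1 / real P)"
    using rle r0 by (intro powr_mono2) auto
  also have "\<dots> = e" using P assms(2) by (simp add: powr_realpow'[symmetric] powr_powr)
  finally show ?thesis unfolding Snorm_def exps(1)[OF assms(1)] using fin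
    by (simp add: r_def[symmetric] P_def ennreal_leI)
qed

lemma Sp_diff:
  fixes f g :: "'a::euclidean_space \<Rightarrow> real"
  assumes [measurable]: "f \<in> borel_measurable borel" "g \<in> borel_measurable borel"
  shows "Sp P (\<lambda>z. f z - g z) \<le> ennreal (2 ^ P) * (Sp P f + Sp P g)"
proof -
  have pw: "\<bar>x - y\<bar> ^ P \<le> 2 ^ P * (\<bar>x\<bar> ^ P + \<bar>y\<bar> ^ P)" for x y :: real
  proof -
    have "\<bar>x - y\<bar> \<le> 2 * max \<bar>x\<bar> \<bar>y\<bar>" by simp
    hence "\<bar>x - y\<bar> ^ P \<le> (2 * max \<bar>x\<bar> \<bar>y\<bar>) ^ P" by (intro power_mono) auto
    also have "\<dots> = 2 ^ P * max \<bar>x\<bar> \<bar>y\<bar> ^ P" by (simp add: power_mult_distrib)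
    also have "max \<bar>x\<bar> \<bar>y\<bar> ^ P \<le> \<bar>x\<bar> ^ P + \<bar>y\<bar> ^ P" by (simp add: max_def)
    finally show ?thesis by simp
  qed
  have "Sp P (\<lambda>z. f z - g z) \<le> (\<integral>\<^sup>+z. ennreal (2 ^ P) * (ennreal (\<bar>f z\<bar> ^ P) + ennreal (\<bar>g z\<bar> ^ P)) \<partial>lborel)"
    unfolding Sp_def
  proof (rule nn_integral_mono)
    fix z
    have "ennreal (\<bar>f z - g z\<bar> ^ P) \<le> ennreal (2 ^ P * (\<bar>f z\<bar> ^ P + \<bar>g z\<bar> ^ P))"
      by (intro ennreal_leI pw)
    also have "\<dots> = ennreal (2 ^ P) * (ennreal (\<bar>f z\<bar> ^ P) + ennreal (\<bar>g z\<bar> ^ P))"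
      by (simp add: ennreal_mult ennreal_plus[symmetric] del: ennreal_plus)
    finally show "ennreal (\<bar>f z - g z\<bar> ^ P) \<le> ennreal (2 ^ P) * (ennreal (\<bar>f z\<bar> ^ P) + ennreal (\<bar>g z\<bar> ^ P))" .
  qed
  also have "\<dots> = ennreal (2 ^ P) * (Sp P f + Sp P g)"
    unfolding Sp_def by (simp add: nn_integral_cmult nn_integral_add)
  finally show ?thesis .
qed

lemma orth_conv:
  assumes l: "\<And>n. l n > 0"
    and o: "filterlim (\<lambda>n. \<bar>ln (l n / l' n)\<bar> + \<bar>t n - t' n\<bar> / l n + norm (x n - x' n) / l n) at_top sequentially"
  shows "filterlim (\<lambda>n. \<bar>ln (l n / l' n)\<bar> + dist (t n, x n :: 'b::real_normed_vector) (t' n, x' n) / l n) at_top sequentially"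
  unfolding filterlim_at_top
proof
  fix Z :: real
  have "eventually (\<lambda>n. 2 * \<bar>Z\<bar> \<le> \<bar>ln (l n / l' n)\<bar> + \<bar>t n - t' n\<bar> / l n + norm (x n - x' n) / l n) sequentially"
    using o by (simp add: filterlim_at_top)
  thus "eventually (\<lambda>n. Z \<le> \<bar>ln (l n / l' n)\<bar> + dist (t n, x n) (t' n, x' n) / l n) sequentially"
  proof eventually_elim
    case (elim n)
    have d1: "\<bar>t n - t' n\<bar> \<le> dist (t n, x n) (t' n, x' n)"
      using dist_fst_le[of "(t n, x n)" "(t' n, x' n)"] by (simp add: dist_real_def)
    have d2: "norm (x n - x' n) \<le> dist (t n, x n) (t' n, x' n)"
      using dist_snd_le[of "(t n, x n)" "(t' n, x' n)"] by (simp add: dist_norm)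
    have "\<bar>t n - t' n\<bar> + norm (x n - x' n) \<le> 2 * dist (t n, x n) (t' n, x' n)" using d1 d2 by linarith
    hence "(\<bar>t n - t' n\<bar> + norm (x n - x' n)) / l n \<le> (2 * dist (t n, x n) (t' n, x' n)) / l n"
      using l[of n] by (intro divide_right_mono) auto
    hence "\<bar>t n - t' n\<bar> / l n + norm (x n - x' n) / l n \<le> 2 * (dist (t n, x n) (t' n, x' n) / l n)"
      by (simp add: add_divide_distrib)
    moreover have "\<bar>ln (l n / l' n)\<bar> \<le> 2 * \<bar>ln (l n / l' n)\<bar>" by simp
    ultimately have "2 * \<bar>Z\<bar> \<le> 2 * \<bar>ln (l n / l' n)\<bar> + 2 * (dist (t n, x n) (t' n, x' n) / l n)"
      using elim by linarith
    thus ?case by (simp add: distrib_left[symmetric])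
  qed
qed



lemma tail_small:
  fixes f :: "nat \<Rightarrow> ennreal" and d :: real
  assumes fin: "(\<Sum>j. f (Suc j)) < \<infinity>" and d: "d > 0"
  shows "\<exists>N0. \<forall>m\<ge>N0. \<forall>J. (\<Sum>j\<in>{Suc m..J}. f j) \<le> ennreal d"
proof -
  have each: "f (Suc j) < \<infinity>" for j
  proof -
    have "f (Suc j) = (\<Sum>i\<in>{j}. f (Suc i))" by simp
    also have "\<dots> \<le> (\<Sum>j. f (Suc j))" by (rule sum_le_suminf) auto
    finally show ?thesis using fin by simp
  qed
  define r where "r j = enn2real (f (Suc j))" for j
  have fr: "f (Suc j) = ennreal (r j)" for j using each[of j] by (simp add: r_def ennreal_enn2real_if)
  have r0: "r j \<ge> 0" for j by (simp add: r_def)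
  have "summable r"
    by (rule summable_suminf_not_top) (use r0 fin in \<open>auto simp: fr[symmetric]\<close>)
  then obtain N0 where N0: "\<forall>m\<ge>N0. \<forall>n. norm (sum r {m..<n}) < d"
    using d unfolding summable_Cauchy by blast
  have "(\<Sum>j\<in>{Suc m..J}. f j) \<le> ennreal d" if "m \<ge> N0" for m J
  proof -
    have "{Suc m..J} = Suc ` {m..<J}" by (simp add: atLeastLessThanSuc_atLeastAtMost)
    hence "(\<Sum>j\<in>{Suc m..J}. f j) = (\<Sum>k\<in>{m..<J}. f (Suc k))"
      by (simp only: sum.reindex[OF inj_on_subset[OF inj_Suc subset_UNIV], unfolded comp_def])
    also have "\<dots> = ennreal (sum r {m..<J})" using r0 by (simp add: fr)
    also have "\<dots> \<le> ennreal d" proof (intro ennreal_leI)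
      have "norm (sum r {m..<J}) < d" using N0 that by blast
      thus "sum r {m..<J} \<le> d" by simp
    qed
    finally show ?thesis .
  qed
  thus ?thesis by blast
qed



theorem claim3p9:
  fixes UL VL :: "nat \<Rightarrow> real \<Rightarrow> real^'n \<Rightarrow> real"
    and GL :: "nat \<Rightarrow> real \<Rightarrow> real^'n \<Rightarrow> real^'n"
    and lam tt :: "nat \<Rightarrow> nat \<Rightarrow> real" and xx :: "nat \<Rightarrow> nat \<Rightarrow> real^'n"
    and u0 u1 :: "nat \<Rightarrow> real^'n \<Rightarrow> real"
    and uL vL :: "nat \<Rightarrow> real \<Rightarrow> real^'n \<Rightarrow> real"
    and gL :: "nat \<Rightarrow> real \<Rightarrow> real^'n \<Rightarrow> real^'n"
    and Jk :: "nat \<Rightarrow> nat"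
  assumes dim: "CARD('n) \<in> {3, 4, 5}"
    and profiles: "\<forall>j\<ge>1. fe_wave_sol (UL j) (VL j) (GL j)"
    and lam_pos: "\<forall>j\<ge>1. \<forall>n. lam j n > 0"
    and orth: "\<forall>j\<ge>1. \<forall>k\<ge>1. j \<noteq> k \<longrightarrow>
                 orth_params (lam j) (tt j) (xx j) (lam k) (tt k) (xx k)"
    and summ: "(\<Sum>j. Snorm_p (UL (Suc j))) < \<infinity>"
    and sols: "\<forall>n. fe_wave_sol (uL n) (vL n) (gL n)"
    and data0: "\<forall>n. uL n 0 = u0 n" and data1: "\<forall>n. vL n 0 = u1 n"
    and bdd: "\<exists>C. \<forall>n. (\<integral>\<^sup>+x. ennreal (norm (gL n 0 x) ^ 2) \<partial>lborel)
                      + (\<integral>\<^sup>+x. ennreal ((u1 n x) ^ 2) \<partial>lborel) \<le> ennreal C"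
    and Jk_lim: "filterlim Jk at_top sequentially"
    and decomp_k: "(\<lambda>k. limsup (\<lambda>n. Snorm (\<lambda>t x. uL n t x -
                     (\<Sum>j\<in>{1..Jk k}. resc (lam j n) (tt j n) (xx j n) (UL j) t x))))
                   \<longlonglongrightarrow> 0"
  shows "(\<lambda>J. limsup (\<lambda>n. Snorm (\<lambda>t x. uL n t x -
            (\<Sum>j\<in>{1..J}. resc (lam j n) (tt j n) (xx j n) (UL j) t x))))
         \<longlonglongrightarrow> 0"
proof -
  define P where "P = pexp CARD('n)"
  define q where "q = P - 1"
  define a where "a = aexp CARD('n)"
  have P4: "P \<ge> 4" using exps(4)[OF dim] by (simp add: P_def)
  have SqP: "Suc q = P" using P4 by (simp add: q_def)
  have q1: "q \<ge> 1" using P4 by (simp add: q_def)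
  have a0: "a > 0" using exps(3)[OF dim] by (simp add: a_def)
  have aD: "a * (real q + 1) = real DIM(real \<times> (real^'n))"
  proof -
    have "real q + 1 = real P" using SqP by (metis of_nat_Suc add.commute)
    thus ?thesis using exps(2)[OF dim] by (simp add: a_def P_def mult.commute)
  qed
  define V where "V j = uc (UL j)" for j
  have Vm: "V j \<in> borel_measurable borel" if "j \<ge> 1" for j
    using profiles that by (simp add: fe_wave_sol_def V_def uc_def)
  have um: "uc (uL n) \<in> borel_measurable borel" for n
    using sols by (simp add: fe_wave_sol_def uc_def)
  have SpV: "Sp P (V j) = Snorm_p (UL j)" for j
    unfolding V_def P_def by (rule Snorm_p_Sp[OF dim, symmetric])
  have Vfin: "Sp P (V j) < \<infinity>" if "j \<ge> 1" for j
  proof -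
    have "j \<noteq> 0" using that by simp
    then obtain i where i: "j = Suc i" using not0_implies_Suc by blast
    have "Snorm_p (UL (Suc i)) = (\<Sum>k\<in>{i}. Snorm_p (UL (Suc k)))" by simp
    also have "\<dots> \<le> (\<Sum>k. Snorm_p (UL (Suc k)))" by (rule sum_le_suminf) auto
    finally show ?thesis using summ unfolding SpV i by simp
  qed
  define c where "c j n = (tt j n, xx j n)" for j n
  have orth': "filterlim (\<lambda>n. \<bar>ln (lam j n / lam k n)\<bar> + dist (c j n) (c k n) / lam j n) at_top sequentially"
    if "j \<ge> 1" "k \<ge> 1" "j \<noteq> k" for j k
    unfolding c_def
    by (rule orth_conv) (use lam_pos orth that in \<open>auto simp: orth_params_def\<close>)
  define T where "T j n = Tr a (lam j n) (c j n) (V j)" for j n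
  define W where "W n J = (\<lambda>z. uc (uL n) z - (\<Sum>j\<in>{1..J}. T j n z))" for n J
  define S where "S n J = Snorm (\<lambda>t x. uL n t x - (\<Sum>j\<in>{1..J}. resc (lam j n) (tt j n) (xx j n) (UL j) t x))" for n J
  have SW: "Snorm_p (\<lambda>t x. uL n t x - (\<Sum>j\<in>{1..J}. resc (lam j n) (tt j n) (xx j n) (UL j) t x)) = Sp P (W n J)" for n J
  proof -
    have "uc (\<lambda>t x. uL n t x - (\<Sum>j\<in>{1..J}. resc (lam j n) (tt j n) (xx j n) (UL j) t x)) = W n J"
    proof (rule ext)
      fix z :: "real \<times> (real^'n)"
      have "resc (lam j n) (tt j n) (xx j n) (UL j) (fst z) (snd z) = T j n z" for j
        using fun_cong[OF uc_resc[OF dim, of "lam j n" "tt j n" "xx j n" "UL j"], of z]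
        by (simp add: T_def V_def uc_def c_def a_def)
      thus "uc (\<lambda>t x. uL n t x - (\<Sum>j\<in>{1..J}. resc (lam j n) (tt j n) (xx j n) (UL j) t x)) z = W n J z"
        by (simp add: uc_def W_def)
    qed
    thus ?thesis unfolding P_def by (simp add: Snorm_p_Sp[OF dim])
  qed
  have Tm[measurable]: "T j n \<in> borel_measurable borel" if "j \<ge> 1" for j n
    unfolding T_def using Vm[OF that] by measurable
  have Wm: "W n J \<in> borel_measurable borel" for n J
    unfolding W_def using um Tm by (intro borel_measurable_diff borel_measurable_sum) auto
  show ?thesis
    unfolding S_def[symmetric]
  proof (rule ennreal_tendsto_0I)
    fix e :: real assume e: "e > 0"
    define eta where "eta = e ^ P / 2 ^ (P + 1)"
    have eta0: "eta > 0" using e by (simp add: eta_def)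
    define eta' where "eta' = root P eta"
    have eta'0: "eta' > 0" using eta0 P4 by (simp add: eta'_def)
    have eta'P: "eta' ^ P = eta" using eta0 P4 by (simp add: eta'_def real_root_pow_pos)
    obtain N0 where N0: "\<forall>m\<ge>N0. \<forall>J. (\<Sum>j\<in>{Suc m..J}. Snorm_p (UL j)) \<le> ennreal (eta / 2)"
      using tail_small[of "\<lambda>j. Snorm_p (UL j)" "eta / 2"] summ eta0 by auto
    have ev1: "eventually (\<lambda>k. limsup (\<lambda>n. S n (Jk k)) < ennreal eta') sequentially"
      using decomp_k eta'0 unfolding S_def by (intro order_tendstoD(2)) auto
    have ev2: "eventually (\<lambda>k. N0 \<le> Jk k) sequentially"
      using Jk_lim by (simp add: filterlim_at_top)
    obtain k where k1: "limsup (\<lambda>n. S n (Jk k)) < ennreal eta'" and k2: "N0 \<le> Jk k"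
      using eventually_conj[OF ev1 ev2] by (auto simp: eventually_sequentially)
    define K where "K = Jk k"
    show "eventually (\<lambda>J. limsup (\<lambda>n. S n J) \<le> ennreal e) sequentially"
      using eventually_ge_at_top[of K]
    proof eventually_elim
      case (elim J)
      note JK = elim
      have evA: "eventually (\<lambda>n. S n K < ennreal eta') sequentially"
        using k1 unfolding K_def by (rule Limsup_lessD)
      have evB: "eventually (\<lambda>n. Sp (Suc q) (\<lambda>z. \<Sum>j\<in>{Suc K..J}. T j n z)
            \<le> (\<Sum>j\<in>{Suc K..J}. Sp (Suc q) (V j)) + ennreal (eta / 2)) sequentially"
        unfolding T_def
        by (rule sum_bound[OF _ _ _ _ q1 a0 aD]) (use Vm Vfin lam_pos orth' eta0 SqP in auto)
      have tail: "(\<Sum>j\<in>{Suc K..J}. Sp (Suc q) (V j)) \<le> ennreal (eta / 2)"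
        using N0 k2 unfolding K_def SqP SpV by auto
      have "eventually (\<lambda>n. S n J \<le> ennreal e) sequentially"
        using evA evB
      proof eventually_elim
        case (elim n)
        have A: "Sp P (W n K) \<le> ennreal eta"
          using Snorm_less[OF dim elim(1)[unfolded S_def]] unfolding SW P_def[symmetric] eta'P .
        have B: "Sp P (\<lambda>z. \<Sum>j\<in>{Suc K..J}. T j n z) \<le> ennreal eta"
        proof -
          have "Sp P (\<lambda>z. \<Sum>j\<in>{Suc K..J}. T j n z) \<le> ennreal (eta / 2) + ennreal (eta / 2)"
            using elim(2) tail unfolding SqP by (meson add_right_mono order_trans)
          also have "\<dots> = ennreal eta" using eta0 by (simp add: ennreal_plus[symmetric] del: ennreal_plus)
          finally show ?thesis .
        qed
        have WJ: "W n J = (\<lambda>z. W n K z - (\<Sum>j\<in>{Suc K..J}. T j n z))"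
        proof (rule ext)
          fix z
          have "{1..J} = {1..K} \<union> {Suc K..J}" using JK by auto
          hence "(\<Sum>j\<in>{1..J}. T j n z) = (\<Sum>j\<in>{1..K}. T j n z) + (\<Sum>j\<in>{Suc K..J}. T j n z)"
            by (simp add: sum.union_disjoint)
          thus "W n J z = W n K z - (\<Sum>j\<in>{Suc K..J}. T j n z)" by (simp add: W_def)
        qed
        have Bm: "(\<lambda>z. \<Sum>j\<in>{Suc K..J}. T j n z) \<in> borel_measurable borel"
          using Tm by (intro borel_measurable_sum) auto
        have "Sp P (W n J) \<le> ennreal (2 ^ P) * (Sp P (W n K) + Sp P (\<lambda>z. \<Sum>j\<in>{Suc K..J}. T j n z))"
          unfolding WJ by (rule Sp_diff[OF Wm Bm])
        also have "\<dots> \<le> ennreal (2 ^ P) * (ennreal eta + ennreal eta)"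
          using A B by (intro mult_left_mono add_mono) auto
        also have "\<dots> = ennreal (e ^ P)"
          using eta0 by (simp add: ennreal_plus[symmetric] ennreal_mult[symmetric] eta_def del: ennreal_plus)
        finally have "Snorm_p (\<lambda>t x. uL n t x - (\<Sum>j\<in>{1..J}. resc (lam j n) (tt j n) (xx j n) (UL j) t x)) \<le> ennreal (e ^ pexp CARD('n))"
          unfolding SW P_def .
        thus ?case unfolding S_def by (rule Snorm_le[OF dim less_imp_le[OF e]])
      qed
      thus ?case by (rule Limsup_bounded)
    qed
  qed
qed


end
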